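(* Let $A_\star,\hat A\in\mathbb{R}^{n\times n}$, $B_\star,\hat B\in\mathbb{R}^{n\times m}$. For any $P_1,P_2\in\mathbb{S}^n_+$ and any integer $i\ge0$, define $\hat P_{(i)}=\mathcal{R}^{(i)}_{\hat A,\hat B}(P_1)$ and $P_{(i)}=\mathcal{R}^{(i)}_{A_\star,B_\star}(P_2)$. Then $$\hat P_{(i)}-P_{(i)}=\big[\Phi^{(0:i)}_{\hat A,\hat B}(P_1)\big]^\top(P_1-P_2)\,\bar\Phi^{(0:i)}(P_2)+\sum_{j=1}^{i}\big[\Phi^{(i-j+1:i)}_{\hat A,\hat B}(P_1)\big]^\top\mathcal{M}\big(\hat P_{(i-j)},P_{(i-j)}\big)\,\bar\Phi^{(i-j+1:i)}(P_2),$$ where for $P_1,P_2\in\mathbb{S}^n_+$, $$\mathcal{M}(P_1,P_2)=\hat A^\top P_2(I+S_{B_\star}P_2)^{-1}\hat A-A_\star^\top P_2(I+S_{B_\star}P_2)^{-1}A_\star+\hat A^\top(I+P_1S_{\hat B})^{-1}P_2(S_{B_\star}-S_{\hat B})P_2(I+S_{B_\star}P_2)^{-1}\hat A.$$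
   Context: $R\in\mathbb{S}^m_{++}$, $Q\in\mathbb{S}^n_+$. $S_B=BR^{-1}B^\top$. Riccati map $\mathcal{R}_{A,B}(P)=A^\top P(I+S_BP)^{-1}A+Q$ on $\mathbb{S}^n_+$, iterates $\mathcal{R}^{(0)}_{A,B}=\mathrm{id}$, $\mathcal{R}^{(i+1)}_{A,B}=\mathcal{R}_{A,B}\circ\mathcal{R}^{(i)}_{A,B}$. $\mathcal{K}_{A,B}(F)=(R+B^\top FB)^{-1}B^\top FA$ and $\mathcal{L}_{A,B}(P)=(I+S_BP)^{-1}A=A-B\mathcal{K}_{A,B}(P)$. For integers $0\le j\le i$: $\Phi^{(j:i)}_{A,B}(P)=\mathcal{L}_{A,B}(\mathcal{R}^{(j)}_{A,B}(P))\cdots\mathcal{L}_{A,B}(\mathcal{R}^{(i-1)}_{A,B}(P))$ if $i>j$, and $=I$ if $i=j$. Define $\mathcal{W}(P)=I+(S_{B_\star}-S_{\hat B})P$, $\mathcal{H}(P)=(I+S_{B_\star}P)^{-1}(\hat A-A_\star)$, $\bar{\mathcal{L}}(P)=\mathcal{W}(P)[\mathcal{H}(P)+\mathcal{L}_{A_\star,B_\star}(P)]$, and $\bar\Phi^{(j:i)}(P)=\bar{\mathcal{L}}(\mathcal{R}^{(j)}_{A_\star,B_\star}(P))\cdots\bar{\mathcal{L}}(\mathcal{R}^{(i-1)}_{A_\star,B_\star}(P))$ if $i>j$, and $=I$ if $i=j$. *)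

theory Defs
  imports "HOL-Analysis.Analysis"
begin

(* Matrices: real^'c^'r is an 'r x 'c matrix; n = CARD('n), m = CARD('m). *)

definition psd :: "real^'n^'n \<Rightarrow> bool" where
  "psd P \<longleftrightarrow> transpose P = P \<and> (\<forall>x. 0 \<le> x \<bullet> (P *v x))"

definition pd :: "real^'n^'n \<Rightarrow> bool" where
  "pd P \<longleftrightarrow> transpose P = P \<and> (\<forall>x. x \<noteq> 0 \<longrightarrow> 0 < x \<bullet> (P *v x))"

definition SB :: "real^'m^'m \<Rightarrow> real^'m^'n \<Rightarrow> real^'n^'n" where
  "SB R B = B ** matrix_inv R ** transpose B"

definition ric :: "real^'m^'m \<Rightarrow> real^'n^'n \<Rightarrow> real^'n^'n \<Rightarrow> real^'m^'n \<Rightarrow> real^'n^'n \<Rightarrow> real^'n^'n" where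
  "ric R Q A B P = transpose A ** P ** matrix_inv (mat 1 + SB R B ** P) ** A + Q"

definition ric_iter :: "real^'m^'m \<Rightarrow> real^'n^'n \<Rightarrow> real^'n^'n \<Rightarrow> real^'m^'n \<Rightarrow> nat \<Rightarrow> real^'n^'n \<Rightarrow> real^'n^'n" where
  "ric_iter R Q A B i = (ric R Q A B ^^ i)"

definition Kgain :: "real^'m^'m \<Rightarrow> real^'n^'n \<Rightarrow> real^'m^'n \<Rightarrow> real^'n^'n \<Rightarrow> real^'n^'m" where
  "Kgain R A B F = matrix_inv (R + transpose B ** F ** B) ** transpose B ** F ** A"

definition Lcl :: "real^'m^'m \<Rightarrow> real^'n^'n \<Rightarrow> real^'m^'n \<Rightarrow> real^'n^'n \<Rightarrow> real^'n^'n" where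
  "Lcl R A B P = matrix_inv (mat 1 + SB R B ** P) ** A"

(* ordered product M_j ** M_{j+1} ** ... ** M_{i-1}; identity if i <= j *)
definition mprod :: "(nat \<Rightarrow> real^'n^'n) \<Rightarrow> nat \<Rightarrow> nat \<Rightarrow> real^'n^'n" where
  "mprod f j i = foldr (\<lambda>k M. f k ** M) [j..<i] (mat 1)"

definition Phi :: "real^'m^'m \<Rightarrow> real^'n^'n \<Rightarrow> real^'n^'n \<Rightarrow> real^'m^'n \<Rightarrow> nat \<Rightarrow> nat \<Rightarrow> real^'n^'n \<Rightarrow> real^'n^'n" where
  "Phi R Q A B j i P = mprod (\<lambda>k. Lcl R A B (ric_iter R Q A B k P)) j i"

definition Wm :: "real^'m^'m \<Rightarrow> real^'m^'n \<Rightarrow> real^'m^'n \<Rightarrow> real^'n^'n \<Rightarrow> real^'n^'n" where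
  "Wm R Bs Bh P = mat 1 + (SB R Bs - SB R Bh) ** P"

definition Hm :: "real^'m^'m \<Rightarrow> real^'n^'n \<Rightarrow> real^'m^'n \<Rightarrow> real^'n^'n \<Rightarrow> real^'n^'n \<Rightarrow> real^'n^'n" where
  "Hm R As Bs Ah P = matrix_inv (mat 1 + SB R Bs ** P) ** (Ah - As)"

definition Lbar :: "real^'m^'m \<Rightarrow> real^'n^'n \<Rightarrow> real^'m^'n \<Rightarrow> real^'n^'n \<Rightarrow> real^'m^'n \<Rightarrow> real^'n^'n \<Rightarrow> real^'n^'n" where
  "Lbar R As Bs Ah Bh P = Wm R Bs Bh P ** (Hm R As Bs Ah P + Lcl R As Bs P)"

definition Phibar :: "real^'m^'m \<Rightarrow> real^'n^'n \<Rightarrow> real^'n^'n \<Rightarrow> real^'m^'n \<Rightarrow> real^'n^'n \<Rightarrow> real^'m^'n \<Rightarrow> nat \<Rightarrow> nat \<Rightarrow> real^'n^'n \<Rightarrow> real^'n^'n" where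
  "Phibar R Q As Bs Ah Bh j i P = mprod (\<lambda>k. Lbar R As Bs Ah Bh (ric_iter R Q As Bs k P)) j i"

definition Mm :: "real^'m^'m \<Rightarrow> real^'n^'n \<Rightarrow> real^'m^'n \<Rightarrow> real^'n^'n \<Rightarrow> real^'m^'n \<Rightarrow> real^'n^'n \<Rightarrow> real^'n^'n \<Rightarrow> real^'n^'n" where
  "Mm R As Bs Ah Bh P1 P2 =
     transpose Ah ** P2 ** matrix_inv (mat 1 + SB R Bs ** P2) ** Ah
   - transpose As ** P2 ** matrix_inv (mat 1 + SB R Bs ** P2) ** As
   + transpose Ah ** matrix_inv (mat 1 + P1 ** SB R Bh) ** P2 ** (SB R Bs - SB R Bh) ** P2
       ** matrix_inv (mat 1 + SB R Bs ** P2) ** Ah"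

end

theory Submission imports Defs begin

lemma mm_rdistrib: "((A::real^'n^'m) + B) ** (C::real^'p^'n) = A ** C + B ** C"
  by (vector matrix_matrix_mult_def sum.distrib[symmetric] field_simps)
lemma mm_ldiff: "(A::real^'n^'m) ** ((B::real^'p^'n) - C) = A ** B - A ** C"
  by (vector matrix_matrix_mult_def sum_subtractf[symmetric] field_simps)
lemma mm_rdiff: "((A::real^'n^'m) - B) ** (C::real^'p^'n) = A ** C - B ** C"
  by (vector matrix_matrix_mult_def sum_subtractf[symmetric] field_simps)
lemma tr_add: "transpose ((A::real^'n^'m) + B) = transpose A + transpose B"
  by (simp add: transpose_def vec_eq_iff)
lemma tr_diff: "transpose ((A::real^'n^'m) - B) = transpose A - transpose B"
  by (simp add: transpose_def vec_eq_iff)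
lemma mm_sum_left: "(A::real^'n^'m) ** (\<Sum>k\<in>K. (F k::real^'p^'n)) = (\<Sum>k\<in>K. A ** F k)"
  by (induct K rule: infinite_finite_induct) (auto simp: matrix_add_ldistrib)
lemma mm_sum_right: "(\<Sum>k\<in>K. (F k::real^'n^'m)) ** (A::real^'p^'n) = (\<Sum>k\<in>K. F k ** A)"
  by (induct K rule: infinite_finite_induct) (auto simp: mm_rdistrib)

lemma minv:
  assumes "invertible (X::real^'n^'n)"
  shows "X ** matrix_inv X = mat 1" "matrix_inv X ** X = mat 1"
proof -
  have "\<exists>A'. X ** A' = mat 1 \<and> A' ** X = mat 1" using assms invertible_def by blast
  hence "X ** matrix_inv X = mat 1 \<and> matrix_inv X ** X = mat 1"
    unfolding matrix_inv_def by (rule someI_ex)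
  thus "X ** matrix_inv X = mat 1" "matrix_inv X ** X = mat 1" by auto
qed

lemma minv_unique:
  assumes "invertible (X::real^'n^'n)" "Y ** X = mat 1"
  shows "matrix_inv X = Y"
  by (metis assms minv(1) matrix_mul_assoc matrix_mul_lid matrix_mul_rid)

lemma tr_inv:
  assumes "invertible (X::real^'n^'n)"
  shows "transpose (matrix_inv X) = matrix_inv (transpose X)"
proof -
  have "transpose (matrix_inv X) ** transpose X = mat 1"
    by (metis assms minv(1) matrix_transpose_mul transpose_mat)
  thus ?thesis using minv_unique[OF transpose_invertible[OF assms]] by metis
qed

lemma dot_tr: "x \<bullet> ((A::real^'n^'m) *v y) = (transpose A *v x) \<bullet> y"
  by (simp add: dot_lmul_matrix)

lemma psd_zero:
  assumes "psd P" "x \<bullet> ((P::real^'n^'n) *v x) = 0"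
  shows "P *v x = 0"
proof (rule ccontr)
  assume ne: "P *v x \<noteq> 0"
  define y where "y = P *v x"
  define a where "a = y \<bullet> y"
  define c where "c = y \<bullet> (P *v y)"
  have a: "a > 0" using ne by (simp add: a_def y_def)
  have c: "c \<ge> 0" using assms(1) by (simp add: psd_def c_def)
  have sym: "x \<bullet> (P *v y) = y \<bullet> (P *v x)"
    using assms(1) by (metis dot_tr inner_commute psd_def)
  define t where "t = - a / (c + 1)"
  have "0 \<le> (x + t *\<^sub>R y) \<bullet> (P *v (x + t *\<^sub>R y))" using assms(1) by (simp add: psd_def)
  also have "\<dots> = x \<bullet> (P *v x) + 2 * t * (y \<bullet> (P *v x)) + t * t * c"
    by (simp add: matrix_vector_right_distrib matrix_vector_mult_scaleR
        inner_add_left inner_add_right sym c_def inner_commute[of y "P *v x"] algebra_simps)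
  also have "\<dots> = 2 * t * a + t * t * c" using assms(2) by (simp add: a_def y_def)
  also have "\<dots> = t * (2 * a + t * c)" by (simp add: algebra_simps)
  finally have h: "0 \<le> t * (2 * a + t * c)" .
  have t0: "t < 0" using a c by (simp add: t_def field_simps)
  have "2 * a + t * c > 0"
  proof -
    have "t * c \<ge> - a" using a c by (simp add: t_def field_simps)
    thus ?thesis using a by linarith
  qed

  hence "t * (2 * a + t * c) < 0" using t0 by (rule mult_neg_pos[rotated])
  thus False using h by linarith
qed

lemma tr_mm3: "transpose ((A::real^'n^'m) ** (B::real^'p^'n) ** (C::real^'q^'p)) = transpose C ** transpose B ** transpose A"
  by (simp add: matrix_transpose_mul matrix_mul_assoc)

lemma inv_kernel:
  assumes "\<And>x. (X::real^'n^'n) *v x = 0 \<Longrightarrow> x = 0"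
  shows "invertible X"
  using assms invertible_left_inverse matrix_left_invertible_ker by blast

lemma inv_IplusSP:
  assumes S: "psd (S::real^'n^'n)" and P: "psd P"
  shows "invertible (mat 1 + S ** P)"
proof (rule inv_kernel)
  fix x assume h: "(mat 1 + S ** P) *v x = 0"
  define y where "y = P *v x"
  have hx: "x = - (S *v y)" using h
    by (simp add: y_def matrix_vector_mult_add_rdistrib matrix_vector_mul_assoc[symmetric] eq_neg_iff_add_eq_0)
  have "x \<bullet> (P *v x) = x \<bullet> y" by (simp add: y_def)
  also have "\<dots> = - (y \<bullet> (S *v y))" by (simp add: hx inner_commute)
  finally have e: "x \<bullet> (P *v x) = - (y \<bullet> (S *v y))" .
  have "0 \<le> y \<bullet> (S *v y)" "0 \<le> x \<bullet> (P *v x)" using S P by (auto simp: psd_def)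
  hence "x \<bullet> (P *v x) = 0" using e by linarith
  hence "y = 0" using psd_zero[OF P] by (simp add: y_def)
  thus "x = 0" using hx by simp
qed

lemma inv_IplusPS:
  assumes S: "psd (S::real^'n^'n)" and P: "psd P"
  shows "invertible (mat 1 + P ** S)"
proof -
  have "transpose (mat 1 + S ** P) = mat 1 + P ** S"
    using S P by (simp add: tr_add matrix_transpose_mul psd_def)
  thus ?thesis using transpose_invertible[OF inv_IplusSP[OF S P]] by simp
qed

lemma pd_inv: assumes "pd (R::real^'n^'n)" shows "invertible R"
proof (rule inv_kernel)
  fix x assume "R *v x = 0"
  thus "x = 0" using assms unfolding pd_def by (metis inner_zero_right less_irrefl)
qed

lemma psd_Rinv: assumes "pd (R::real^'n^'n)" shows "psd (matrix_inv R)"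
proof -
  have iR: "invertible R" using pd_inv[OF assms] .
  have sym: "transpose R = R" using assms by (simp add: pd_def)
  have "transpose (matrix_inv R) = matrix_inv R" using tr_inv[OF iR] sym by simp
  moreover have "0 \<le> x \<bullet> (matrix_inv R *v x)" for x
  proof -
    define y where "y = matrix_inv R *v x"
    have "x = R *v y" by (simp add: y_def matrix_vector_mul_assoc minv(1)[OF iR])
    hence "x \<bullet> (matrix_inv R *v x) = y \<bullet> (R *v y)" by (simp add: y_def inner_commute)
    also have "\<dots> \<ge> 0" using assms by (cases "y = 0") (auto simp: pd_def less_imp_le)
    finally show ?thesis .
  qed
  ultimately show ?thesis by (simp add: psd_def)
qed

lemma psd_SB: assumes "pd R" shows "psd (SB R B)"
proof -
  have Ri: "psd (matrix_inv R)" using psd_Rinv[OF assms] .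
  have "transpose (SB R B) = SB R B" using Ri by (simp add: SB_def tr_mm3 psd_def)
  moreover have "0 \<le> x \<bullet> (SB R B *v x)" for x
  proof -
    have "x \<bullet> (SB R B *v x) = (transpose B *v x) \<bullet> (matrix_inv R *v (transpose B *v x))"
      by (simp add: SB_def matrix_vector_mul_assoc[symmetric] dot_tr)
    thus ?thesis using Ri by (simp add: psd_def)
  qed
  ultimately show ?thesis by (simp add: psd_def)
qed

lemma push_through:
  assumes X: "invertible (mat 1 + P ** S)" and Z: "invertible (mat 1 + S ** P)"
  shows "P ** matrix_inv (mat 1 + S ** P) = matrix_inv (mat 1 + P ** S) ** (P::real^'n^'n)"
proof -
  let ?Xi = "matrix_inv (mat 1 + P ** S)" and ?Zi = "matrix_inv (mat 1 + S ** P)"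
  have e: "(mat 1 + P ** S) ** P = P ** (mat 1 + S ** P)"
    by (simp add: mm_rdistrib matrix_add_ldistrib matrix_mul_assoc)
  have "P ** ?Zi = ?Xi ** (mat 1 + P ** S) ** P ** ?Zi" by (simp add: minv(2)[OF X])
  also have "\<dots> = ?Xi ** ((mat 1 + P ** S) ** P) ** ?Zi" by (simp add: matrix_mul_assoc)
  also have "\<dots> = ?Xi ** P ** ((mat 1 + S ** P) ** ?Zi)" by (simp add: e matrix_mul_assoc)
  also have "\<dots> = ?Xi ** P" by (simp add: minv(1)[OF Z])
  finally show ?thesis .
qed

lemma psd_ric:
  assumes R: "pd R" and Q: "psd Q" and P: "psd P"
  shows "psd (ric R Q A B P)"
proof -
  let ?S = "SB R B"
  have S: "psd ?S" using psd_SB[OF R] .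
  let ?Zi = "matrix_inv (mat 1 + ?S ** P)" and ?Xi = "matrix_inv (mat 1 + P ** ?S)"
  have Z: "invertible (mat 1 + ?S ** P)" using inv_IplusSP[OF S P] .
  have X: "invertible (mat 1 + P ** ?S)" using inv_IplusPS[OF S P] .
  have trZ: "transpose ?Zi = ?Xi"
    using S P by (simp add: tr_inv[OF Z] tr_add matrix_transpose_mul psd_def)
  have K: "psd (P ** ?Zi)"
  proof -
    have "transpose (P ** ?Zi) = transpose ?Zi ** transpose P" by (rule matrix_transpose_mul)
    also have "\<dots> = ?Xi ** P" using P trZ by (simp add: psd_def)
    also have "\<dots> = P ** ?Zi" using push_through[OF X Z] by simp
    finally have "transpose (P ** ?Zi) = P ** ?Zi" .
    moreover have "0 \<le> z \<bullet> ((P ** ?Zi) *v z)" for z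
    proof -
      define y where "y = ?Zi *v z"
      have "y + ?S *v (P *v y) = (mat 1 + ?S ** P) *v y"
        by (simp add: matrix_vector_mult_add_rdistrib matrix_vector_mul_assoc)
      also have "\<dots> = z" by (simp add: y_def matrix_vector_mul_assoc minv(1)[OF Z])
      finally have zy: "z = y + ?S *v (P *v y)" by simp
      have "z \<bullet> ((P ** ?Zi) *v z) = z \<bullet> (P *v y)" by (simp add: y_def matrix_vector_mul_assoc)
      also have "\<dots> = y \<bullet> (P *v y) + (P *v y) \<bullet> (?S *v (P *v y))"
        by (subst zy) (simp add: inner_add_left inner_add_right inner_commute[of _ "P *v y"])
      also have "\<dots> \<ge> 0" using P S by (simp add: psd_def add_nonneg_nonneg)
      finally show ?thesis .
    qed
    ultimately show ?thesis by (simp add: psd_def)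
  qed
  have "transpose (ric R Q A B P) = ric R Q A B P"
    using K Q by (simp add: ric_def tr_add psd_def matrix_transpose_mul matrix_mul_assoc)
  moreover have "0 \<le> x \<bullet> (ric R Q A B P *v x)" for x
  proof -
    have e1: "ric R Q A B P *v x = transpose A *v ((P ** ?Zi) *v (A *v x)) + Q *v x"
      by (simp add: ric_def matrix_vector_mult_add_rdistrib matrix_vector_mul_assoc matrix_mul_assoc del: transpose_matrix_vector)
    have e2: "x \<bullet> (transpose A *v w) = (A *v x) \<bullet> w" for w
      by (metis dot_tr transpose_transpose)
    have "x \<bullet> (ric R Q A B P *v x) = (A *v x) \<bullet> ((P ** ?Zi) *v (A *v x)) + x \<bullet> (Q *v x)"
      unfolding e1 inner_add_right e2 ..
    thus ?thesis using K Q by (simp add: psd_def)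
  qed
  ultimately show ?thesis by (simp add: psd_def)
qed

lemma psd_iter:
  assumes "pd R" "psd Q" "psd P"
  shows "psd (ric_iter R Q A B k P)"
  by (induct k) (auto simp: ric_iter_def assms psd_ric)


lemma core:
  fixes Xi Yi Ph P Ss Sh :: "real^'n^'n"
  assumes X: "Xi ** (mat 1 + Ph ** Sh) = mat 1"
    and Y: "(mat 1 + Ss ** P) ** Yi = mat 1"
  shows "Xi ** (Ph - P) ** (mat 1 + (Ss - Sh) ** P) ** Yi + P ** Yi + Xi ** P ** (Ss - Sh) ** P ** Yi = Xi ** Ph"
proof -
  let ?X = "mat 1 + Ph ** Sh" and ?Y = "mat 1 + Ss ** P" and ?W = "mat 1 + (Ss - Sh) ** P"
  have a: "P ** Yi = Xi ** (?X ** P) ** Yi"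
    by (metis X matrix_mul_assoc matrix_mul_lid)
  have poly: "(Ph - P) ** ?W + ?X ** P + P ** (Ss - Sh) ** P = Ph ** ?Y"
    by (simp add: matrix_add_ldistrib mm_rdistrib mm_ldiff mm_rdiff matrix_mul_assoc algebra_simps)
  have "Xi ** (Ph - P) ** ?W ** Yi + P ** Yi + Xi ** P ** (Ss - Sh) ** P ** Yi
      = Xi ** ((Ph - P) ** ?W + ?X ** P + P ** (Ss - Sh) ** P) ** Yi"
    unfolding a by (simp only: matrix_add_ldistrib mm_rdistrib matrix_mul_assoc)
  also have "\<dots> = Xi ** Ph ** (?Y ** Yi)" unfolding poly by (simp add: matrix_mul_assoc)
  also have "\<dots> = Xi ** Ph" by (simp add: Y)
  finally show ?thesis .
qed

lemma step:
  assumes Ph: "psd Ph" and P: "psd P" and Sh: "psd (SB R Bh)" and Ss: "psd (SB R Bs)"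
  shows "ric R Q Ah Bh Ph - ric R Q As Bs P
       = transpose (Lcl R Ah Bh Ph) ** (Ph - P) ** Lbar R As Bs Ah Bh P + Mm R As Bs Ah Bh Ph P"
proof -
  let ?Sh = "SB R Bh" and ?Ss = "SB R Bs"
  let ?Zi = "matrix_inv (mat 1 + ?Sh ** Ph)" and ?Xi = "matrix_inv (mat 1 + Ph ** ?Sh)"
    and ?Yi = "matrix_inv (mat 1 + ?Ss ** P)" and ?W = "mat 1 + (?Ss - ?Sh) ** P"
  have Z: "invertible (mat 1 + ?Sh ** Ph)" using inv_IplusSP[OF Sh Ph] .
  have X: "invertible (mat 1 + Ph ** ?Sh)" using inv_IplusPS[OF Sh Ph] .
  have Y: "invertible (mat 1 + ?Ss ** P)" using inv_IplusSP[OF Ss P] .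
  have trZ: "transpose ?Zi = ?Xi"
    using Sh Ph by (simp add: tr_inv[OF Z] tr_add matrix_transpose_mul psd_def)
  have L: "transpose (Lcl R Ah Bh Ph) = transpose Ah ** ?Xi"
    by (simp add: Lcl_def matrix_transpose_mul trZ)
  have Lb: "Lbar R As Bs Ah Bh P = ?W ** ?Yi ** Ah"
    by (simp add: Lbar_def Wm_def Hm_def Lcl_def mm_ldiff matrix_mul_assoc)
  have r1: "ric R Q Ah Bh Ph = transpose Ah ** ?Xi ** Ph ** Ah + Q"
    by (simp add: ric_def matrix_mul_assoc[symmetric] push_through[OF X Z])
  have r2: "ric R Q As Bs P = transpose As ** P ** ?Yi ** As + Q"
    by (simp add: ric_def)
  have c: "?Xi ** (Ph - P) ** ?W ** ?Yi + P ** ?Yi + ?Xi ** P ** (?Ss - ?Sh) ** P ** ?Yi = ?Xi ** Ph"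
    by (rule core[OF minv(2)[OF X] minv(1)[OF Y]])
  have c2: "transpose Ah ** ?Xi ** Ph ** Ah
     = transpose Ah ** ?Xi ** (Ph - P) ** ?W ** ?Yi ** Ah + transpose Ah ** P ** ?Yi ** Ah
       + transpose Ah ** ?Xi ** P ** (?Ss - ?Sh) ** P ** ?Yi ** Ah"
  proof -
    have "transpose Ah ** ?Xi ** Ph ** Ah = transpose Ah ** (?Xi ** Ph) ** Ah"
      by (simp only: matrix_mul_assoc)
    also have "\<dots> = transpose Ah ** (?Xi ** (Ph - P) ** ?W ** ?Yi + P ** ?Yi + ?Xi ** P ** (?Ss - ?Sh) ** P ** ?Yi) ** Ah"
      by (simp only: c)
    also have "\<dots> = transpose Ah ** ?Xi ** (Ph - P) ** ?W ** ?Yi ** Ah + transpose Ah ** P ** ?Yi ** Ah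
       + transpose Ah ** ?Xi ** P ** (?Ss - ?Sh) ** P ** ?Yi ** Ah"
      by (simp only: matrix_add_ldistrib mm_rdistrib matrix_mul_assoc)
    finally show ?thesis .
  qed
  have m: "Mm R As Bs Ah Bh Ph P = transpose Ah ** P ** ?Yi ** Ah - transpose As ** P ** ?Yi ** As
     + transpose Ah ** ?Xi ** P ** (?Ss - ?Sh) ** P ** ?Yi ** Ah"
    by (simp add: Mm_def)
  have t: "transpose (Lcl R Ah Bh Ph) ** (Ph - P) ** Lbar R As Bs Ah Bh P
     = transpose Ah ** ?Xi ** (Ph - P) ** ?W ** ?Yi ** Ah"
    unfolding L Lb by (simp only: matrix_mul_assoc)
  show ?thesis unfolding r1 r2 t m c2 by simp
qed


lemma foldr_mm: "foldr (\<lambda>k M. f k ** M) xs (B::real^'n^'n) = foldr (\<lambda>k M. f k ** M) xs (mat 1) ** B"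
  by (induct xs) (auto simp: matrix_mul_assoc)

lemma mprod_same[simp]: "mprod f i i = mat 1"
  by (simp add: mprod_def)

lemma mprod_Suc: "j \<le> i \<Longrightarrow> mprod f j (Suc i) = mprod f j i ** (f i :: real^'n^'n)"
  unfolding mprod_def by (simp add: foldr_mm[of f _ "f i"])

lemma unroll:
  fixes D M f g :: "nat \<Rightarrow> real^'n^'n"
  assumes rec: "\<And>k. D (Suc k) = transpose (f k) ** D k ** g k + M k"
  shows "D i = transpose (mprod f 0 i) ** D 0 ** mprod g 0 i
     + (\<Sum>k<i. transpose (mprod f (Suc k) i) ** M k ** mprod g (Suc k) i)"
proof (induct i)
  case 0 then show ?case by simp
next
  case (Suc i)
  have s: "(\<Sum>k<i. transpose (mprod f (Suc k) (Suc i)) ** M k ** mprod g (Suc k) (Suc i))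
      = (\<Sum>k<i. transpose (f i) ** (transpose (mprod f (Suc k) i) ** M k ** mprod g (Suc k) i) ** g i)"
    by (rule sum.cong) (auto simp: mprod_Suc matrix_transpose_mul matrix_mul_assoc)
  have "D (Suc i) = transpose (f i) ** D i ** g i + M i" by (rule rec)
  also have "\<dots> = transpose (f i) ** (transpose (mprod f 0 i) ** D 0 ** mprod g 0 i) ** g i
     + (\<Sum>k<i. transpose (f i) ** (transpose (mprod f (Suc k) i) ** M k ** mprod g (Suc k) i) ** g i) + M i"
    by (simp only: Suc matrix_add_ldistrib mm_rdistrib mm_sum_left mm_sum_right)
  also have "\<dots> = transpose (mprod f 0 (Suc i)) ** D 0 ** mprod g 0 (Suc i)
     + (\<Sum>k<Suc i. transpose (mprod f (Suc k) (Suc i)) ** M k ** mprod g (Suc k) (Suc i))"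
    by (simp add: s mprod_Suc matrix_transpose_mul matrix_mul_assoc)
  finally show ?case .
qed

theorem lemma3:
  fixes R :: "real^'m^'m" and Q :: "real^'n^'n"
    and As Ah :: "real^'n^'n" and Bs Bh :: "real^'m^'n"
    and P1 P2 :: "real^'n^'n" and i :: nat
  assumes "pd R" and "psd Q" and "psd P1" and "psd P2"
  shows "ric_iter R Q Ah Bh i P1 - ric_iter R Q As Bs i P2 =
      transpose (Phi R Q Ah Bh 0 i P1) ** (P1 - P2) ** Phibar R Q As Bs Ah Bh 0 i P2
    + (\<Sum>j\<in>{1..i}. transpose (Phi R Q Ah Bh (i - j + 1) i P1)
         ** Mm R As Bs Ah Bh (ric_iter R Q Ah Bh (i - j) P1) (ric_iter R Q As Bs (i - j) P2)
         ** Phibar R Q As Bs Ah Bh (i - j + 1) i P2)"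
proof -
  let ?Ph = "\<lambda>k. ric_iter R Q Ah Bh k P1" and ?P = "\<lambda>k. ric_iter R Q As Bs k P2"
  let ?f = "\<lambda>k. Lcl R Ah Bh (?Ph k)" and ?g = "\<lambda>k. Lbar R As Bs Ah Bh (?P k)"
  let ?M = "\<lambda>k. Mm R As Bs Ah Bh (?Ph k) (?P k)"
  let ?D = "\<lambda>k. ?Ph k - ?P k"
  have rec: "?D (Suc k) = transpose (?f k) ** ?D k ** ?g k + ?M k" for k
  proof -
    have "?D (Suc k) = ric R Q Ah Bh (?Ph k) - ric R Q As Bs (?P k)"
      by (simp add: ric_iter_def)
    also have "\<dots> = transpose (?f k) ** ?D k ** ?g k + ?M k"
      by (rule step[OF psd_iter[OF assms(1,2,3)] psd_iter[OF assms(1,2,4)] psd_SB[OF assms(1)] psd_SB[OF assms(1)]])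
    finally show ?thesis .
  qed
  have u: "?D i = transpose (mprod ?f 0 i) ** ?D 0 ** mprod ?g 0 i
     + (\<Sum>k<i. transpose (mprod ?f (Suc k) i) ** ?M k ** mprod ?g (Suc k) i)"
    by (rule unroll[of ?D ?f ?g ?M, OF rec])
  let ?F = "\<lambda>k. transpose (mprod ?f (Suc k) i) ** ?M k ** mprod ?g (Suc k) i"
  have "(\<Sum>j\<in>{1..i}. ?F (i - j)) = (\<Sum>k<i. ?F (i - Suc k))"
    using sum.atLeast1_atMost_eq[of "\<lambda>j. ?F (i - j)" i] by simp
  also have "\<dots> = (\<Sum>k<i. ?F k)" by (rule sum.nat_diff_reindex)
  finally have ss: "(\<Sum>j\<in>{1..i}. ?F (i - j)) = (\<Sum>k<i. ?F k)" .
  have d0: "?D 0 = P1 - P2" by (simp add: ric_iter_def)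
  show ?thesis
    unfolding Phi_def Phibar_def
    using u ss d0 by simp
qed

end
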